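(* Let $\mathcal R$ be a commutative ring with unit, $L\in\mathbb N$ and $\vec m=(m_0,\dots,m_L)\in\mathcal R^{L+1}$. Then ${}_{\vec m}\mathcal H=({}_{\vec m}\mathcal H_n)_{n\ge0}$ satisfies the homotopy axiom if and only if the ideal of $\mathcal R$ generated by $\{m_0,\dots,m_L\}$ is all of $\mathcal R$ (i.e. there are $r_0,\dots,r_L\in\mathcal R$ with $\sum_k r_km_k=1_{\mathcal R}$). In particular, for $\mathcal R=\mathbb Z$ the homotopy axiom holds iff $\gcd(m_0,\dots,m_L)=1$.
   Context: For a space $X$: $\mathcal S_n(X)$ = continuous maps $[0,1]^n\to X$ ($[0,1]^0=\{0\}$), $\mathcal K_n(X)$ the free $\mathcal R$-module on $\mathcal S_n(X)$, $\mathcal K_{-1}(X)=0$. For $n\ge1$, $T\in\mathcal S_n(X)$, $0\le i\le L$, $1\le j\le n$: $\langle T\rangle_{n,i,j}(x_1,\dots,x_{n-1})=T(x_1,\dots,x_{j-1},i/L,x_j,\dots,x_{n-1})$ (for $n=1$: $\langle T\rangle_{1,i,1}(0)=T(i/L)$). ${}_{\vec m}\partial_n(T)=\sum_{j=1}^n(-1)^{j+1}\sum_{i=0}^Lm_i\langle T\rangle_{n,i,j}$, extended linearly, ${}_{\vec m}\partial_0=0$; this is a chain complex and ${}_{\vec m}\mathcal H_n(X)=\ker{}_{\vec m}\partial_n/\operatorname{im}{}_{\vec m}\partial_{n+1}$, a functor of $X$ via $\mathcal K_n(f)(T)=f\circ T$. The homotopy axiom means: for all homotopic continuous $f\simeq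 g:X\to Y$, ${}_{\vec m}\mathcal H_n(f)={}_{\vec m}\mathcal H_n(g)$ for all $n\ge0$. *)

theory Defs
  imports "HOL-Analysis.Analysis"
begin

text \<open>Points of the cube [0,1]^n are encoded as
  functions nat => real whose coordinates 0..n-1 lie in [0,1] and all others are 0
  (coordinate x_k of the paper is the value at k-1). [0,1]^0 is the single point (%i. 0).\<close>

definition unit_cube :: "nat \<Rightarrow> (nat \<Rightarrow> real) set" where
  "unit_cube n = {x. (\<forall>i<n. 0 \<le> x i \<and> x i \<le> 1) \<and> (\<forall>i\<ge>n. x i = 0)}"

text \<open>Singular n-cubes S_n(X): continuous maps [0,1]^n -> X (made extensional, so that
  each map is represented by exactly one HOL function).\<close>
definition sing_cube :: "nat \<Rightarrow> 'a topology \<Rightarrow> ((nat \<Rightarrow> real) \<Rightarrow> 'a) \<Rightarrow> bool" where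
  "sing_cube n X T \<longleftrightarrow>
     continuous_map (subtopology (powertop_real UNIV) (unit_cube n)) X T \<and>
     T \<in> extensional (unit_cube n)"

text \<open>Chains K_n(X): elements of the free R-module on S_n(X), i.e. finitely supported
  coefficient functions on S_n(X).\<close>
definition chain :: "nat \<Rightarrow> 'a topology \<Rightarrow> (((nat \<Rightarrow> real) \<Rightarrow> 'a) \<Rightarrow> 'r::comm_ring_1) \<Rightarrow> bool" where
  "chain n X c \<longleftrightarrow> finite {T. c T \<noteq> 0} \<and> (\<forall>T. c T \<noteq> 0 \<longrightarrow> sing_cube n X T)"

text \<open>Face <T>_{n,i,j} (1 <= j <= n, 0 <= i <= L): insert i/L as j-th coordinate.\<close>
definition face :: "nat \<Rightarrow> nat \<Rightarrow> nat \<Rightarrow> nat \<Rightarrow> ((nat \<Rightarrow> real) \<Rightarrow> 'a) \<Rightarrow> ((nat \<Rightarrow> real) \<Rightarrow> 'a)" where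
  "face L n i j T = (\<lambda>x. if x \<in> unit_cube (n - 1) then
       T (\<lambda>k. if k < j - 1 then x k else if k = j - 1 then real i / real L else x (k - 1))
     else undefined)"

definition cube_bd :: "nat \<Rightarrow> (nat \<Rightarrow> 'r::comm_ring_1) \<Rightarrow> nat \<Rightarrow> ((nat \<Rightarrow> real) \<Rightarrow> 'a)
    \<Rightarrow> ((nat \<Rightarrow> real) \<Rightarrow> 'a) \<Rightarrow> 'r" where
  "cube_bd L m n T = (\<lambda>S. \<Sum>j\<in>{1..n}. \<Sum>i\<in>{0..L}.
       (- 1) ^ (j + 1) * m i * (if face L n i j T = S then 1 else 0))"

definition chain_bd :: "nat \<Rightarrow> (nat \<Rightarrow> 'r::comm_ring_1) \<Rightarrow> nat
    \<Rightarrow> (((nat \<Rightarrow> real) \<Rightarrow> 'a) \<Rightarrow> 'r) \<Rightarrow> (((nat \<Rightarrow> real) \<Rightarrow> 'a) \<Rightarrow> 'r)" where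
  "chain_bd L m n c = (if n = 0 then (\<lambda>S. 0) else
       (\<lambda>S. \<Sum>T\<in>{T. c T \<noteq> 0}. c T * cube_bd L m n T S))"

definition cycles :: "nat \<Rightarrow> (nat \<Rightarrow> 'r::comm_ring_1) \<Rightarrow> nat \<Rightarrow> 'a topology
    \<Rightarrow> (((nat \<Rightarrow> real) \<Rightarrow> 'a) \<Rightarrow> 'r) set" where
  "cycles L m n X = {c. chain n X c \<and> chain_bd L m n c = (\<lambda>S. 0)}"

definition boundaries :: "nat \<Rightarrow> (nat \<Rightarrow> 'r::comm_ring_1) \<Rightarrow> nat \<Rightarrow> 'a topology
    \<Rightarrow> (((nat \<Rightarrow> real) \<Rightarrow> 'a) \<Rightarrow> 'r) set" where
  "boundaries L m n X = {chain_bd L m (Suc n) c | c. chain (Suc n) X c}"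

definition hclass :: "nat \<Rightarrow> (nat \<Rightarrow> 'r::comm_ring_1) \<Rightarrow> nat \<Rightarrow> 'a topology
    \<Rightarrow> (((nat \<Rightarrow> real) \<Rightarrow> 'a) \<Rightarrow> 'r) \<Rightarrow> (((nat \<Rightarrow> real) \<Rightarrow> 'a) \<Rightarrow> 'r) set" where
  "hclass L m n X z = {(\<lambda>S. z S + b S) | b. b \<in> boundaries L m n X}"

definition homology :: "nat \<Rightarrow> (nat \<Rightarrow> 'r::comm_ring_1) \<Rightarrow> nat \<Rightarrow> 'a topology
    \<Rightarrow> (((nat \<Rightarrow> real) \<Rightarrow> 'a) \<Rightarrow> 'r) set set" where
  "homology L m n X = hclass L m n X ` cycles L m n X"

definition chain_map :: "nat \<Rightarrow> ('a \<Rightarrow> 'b) \<Rightarrow> (((nat \<Rightarrow> real) \<Rightarrow> 'a) \<Rightarrow> 'r::comm_ring_1)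
    \<Rightarrow> (((nat \<Rightarrow> real) \<Rightarrow> 'b) \<Rightarrow> 'r)" where
  "chain_map n f c = (\<lambda>S. \<Sum>T\<in>{T. c T \<noteq> 0 \<and> restrict (f \<circ> T) (unit_cube n) = S}. c T)"

definition hom_map :: "nat \<Rightarrow> (nat \<Rightarrow> 'r::comm_ring_1) \<Rightarrow> nat \<Rightarrow> 'b topology \<Rightarrow> ('a \<Rightarrow> 'b)
    \<Rightarrow> (((nat \<Rightarrow> real) \<Rightarrow> 'a) \<Rightarrow> 'r) set \<Rightarrow> (((nat \<Rightarrow> real) \<Rightarrow> 'b) \<Rightarrow> 'r) set" where
  "hom_map L m n Y f C = hclass L m n Y (chain_map n f (SOME z. z \<in> C))"

definition homotopy_axiom :: "'a itself \<Rightarrow> 'b itself \<Rightarrow> nat \<Rightarrow> (nat \<Rightarrow> 'r::comm_ring_1) \<Rightarrow> bool" where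
  "homotopy_axiom _ _ L m \<longleftrightarrow>
     (\<forall>(X::'a topology) (Y::'b topology) f g. homotopic_with (\<lambda>_. True) X Y f g \<longrightarrow>
        (\<forall>n. \<forall>C\<in>homology L m n X. hom_map L m n Y f C = hom_map L m n Y g C))"

end

theory Submission
  imports Defs
begin

definition lin :: "('c \<Rightarrow> 'd \<Rightarrow> 'r::comm_ring_1) \<Rightarrow> ('c \<Rightarrow> 'r) \<Rightarrow> 'd \<Rightarrow> 'r" where
  "lin \<Phi> c = (\<lambda>S. \<Sum>T\<in>{T. c T \<noteq> 0}. c T * \<Phi> T S)"

definition dl :: "'c \<Rightarrow> 'c \<Rightarrow> 'r::comm_ring_1" where
  "dl U = (\<lambda>S. if U = S then 1 else 0)"

definition fsum :: "'k set \<Rightarrow> ('k \<Rightarrow> 'r::comm_ring_1) \<Rightarrow> ('k \<Rightarrow> 'c) \<Rightarrow> 'c \<Rightarrow> 'r" where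
  "fsum K a U = (\<lambda>S. \<Sum>k\<in>K. a k * dl (U k) S)"

lemma lin_sup:
  assumes "finite F" "{T. c T \<noteq> 0} \<subseteq> F"
  shows "lin \<Phi> c S = (\<Sum>T\<in>F. c T * \<Phi> T S)"
  unfolding lin_def using assms by (intro sum.mono_neutral_left) auto

lemma supp_lin: "{S. lin \<Phi> c S \<noteq> 0} \<subseteq> (\<Union>T\<in>{T. c T \<noteq> 0}. {S. \<Phi> T S \<noteq> 0})"
proof
  fix S assume "S \<in> {S. lin \<Phi> c S \<noteq> 0}"
  then have "(\<Sum>T\<in>{T. c T \<noteq> 0}. c T * \<Phi> T S) \<noteq> 0" by (simp add: lin_def)
  then obtain T where "T \<in> {T. c T \<noteq> 0}" "c T * \<Phi> T S \<noteq> 0" by (meson sum.neutral)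
  then show "S \<in> (\<Union>T\<in>{T. c T \<noteq> 0}. {S. \<Phi> T S \<noteq> 0})" by auto
qed

lemma finite_lin:
  assumes "finite {T. c T \<noteq> 0}" "\<And>T. c T \<noteq> 0 \<Longrightarrow> finite {S. \<Phi> T S \<noteq> 0}"
  shows "finite {S. lin \<Phi> c S \<noteq> 0}"
  by (rule finite_subset[OF supp_lin]) (use assms in auto)

lemma lin_comp:
  assumes fc: "finite {T. c T \<noteq> 0}" and fp: "\<And>T. c T \<noteq> 0 \<Longrightarrow> finite {S. \<Psi> T S \<noteq> 0}"
  shows "lin \<Phi> (lin \<Psi> c) = lin (\<lambda>T. lin \<Phi> (\<Psi> T)) c"
proof
  fix S
  define F where "F = {T. c T \<noteq> 0}"
  define G where "G = (\<Union>T\<in>F. {S. \<Psi> T S \<noteq> 0})"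
  have fF: "finite F" using fc F_def by simp
  have fG: "finite G" using fF fp unfolding G_def F_def by auto
  have "lin \<Phi> (lin \<Psi> c) S = (\<Sum>U\<in>G. lin \<Psi> c U * \<Phi> U S)"
    by (rule lin_sup[OF fG]) (use supp_lin[of \<Psi> c] in \<open>auto simp: G_def F_def\<close>)
  also have "\<dots> = (\<Sum>U\<in>G. (\<Sum>T\<in>F. c T * \<Psi> T U) * \<Phi> U S)"
    by (simp add: lin_def F_def)
  also have "\<dots> = (\<Sum>T\<in>F. c T * (\<Sum>U\<in>G. \<Psi> T U * \<Phi> U S))"
    by (simp add: sum_distrib_left sum_distrib_right sum.swap[of _ G] mult.assoc)
  also have "\<dots> = (\<Sum>T\<in>F. c T * lin \<Phi> (\<Psi> T) S)"
  proof (rule sum.cong[OF refl])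
    fix T assume "T \<in> F"
    have "lin \<Phi> (\<Psi> T) S = (\<Sum>U\<in>G. \<Psi> T U * \<Phi> U S)"
      by (rule lin_sup[OF fG]) (use \<open>T \<in> F\<close> in \<open>auto simp: G_def\<close>)
    then show "c T * (\<Sum>U\<in>G. \<Psi> T U * \<Phi> U S) = c T * lin \<Phi> (\<Psi> T) S" by simp
  qed
  also have "\<dots> = lin (\<lambda>T. lin \<Phi> (\<Psi> T)) c S" by (simp add: lin_def F_def)
  finally show "lin \<Phi> (lin \<Psi> c) S = lin (\<lambda>T. lin \<Phi> (\<Psi> T)) c S" .
qed

lemma supp_fsum: "{S. fsum K a U S \<noteq> 0} \<subseteq> U ` K"
proof
  fix S assume "S \<in> {S. fsum K a U S \<noteq> 0}"
  then have "(\<Sum>k\<in>K. a k * dl (U k) S) \<noteq> 0" by (simp add: fsum_def)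
  then obtain k where "k \<in> K" "a k * dl (U k) S \<noteq> 0" by (meson sum.neutral)
  then show "S \<in> U ` K" by (auto simp: dl_def split: if_splits)
qed

lemma finite_fsum: "finite K \<Longrightarrow> finite {S. fsum K a U S \<noteq> 0}"
  by (rule finite_subset[OF supp_fsum]) simp

lemma lin_fsum:
  assumes "finite K"
  shows "lin \<Phi> (fsum K a U) S = (\<Sum>k\<in>K. a k * \<Phi> (U k) S)"
proof -
  have "lin \<Phi> (fsum K a U) S = (\<Sum>V\<in>U`K. fsum K a U V * \<Phi> V S)"
    by (rule lin_sup) (use assms supp_fsum[of K a U] in auto)
  also have "\<dots> = (\<Sum>k\<in>K. a k * (\<Sum>V\<in>U`K. dl (U k) V * \<Phi> V S))"
    by (simp add: fsum_def sum_distrib_left sum_distrib_right sum.swap[of _ "U`K"] mult.assoc)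
  also have "\<dots> = (\<Sum>k\<in>K. a k * \<Phi> (U k) S)"
  proof (rule sum.cong[OF refl])
    fix k assume k: "k \<in> K"
    have "(\<Sum>V\<in>U`K. dl (U k) V * \<Phi> V S) = (\<Sum>V\<in>U`K. if U k = V then \<Phi> V S else 0)"
      by (intro sum.cong) (auto simp: dl_def)
    also have "\<dots> = \<Phi> (U k) S" using k assms by (simp add: sum.delta)
    finally show "a k * (\<Sum>V\<in>U`K. dl (U k) V * \<Phi> V S) = a k * \<Phi> (U k) S" by simp
  qed
  finally show ?thesis .
qed

lemma lin_dl: "lin \<Phi> (dl U) = \<Phi> U"
proof
  fix S
  have "lin \<Phi> (dl U) S = (\<Sum>T\<in>{U}. dl U T * \<Phi> T S)"
    by (rule lin_sup) (auto simp: dl_def split: if_splits)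
  then show "lin \<Phi> (dl U) S = \<Phi> U S" by (simp add: dl_def)
qed

lemma lin_cong: "(\<And>T. c T \<noteq> 0 \<Longrightarrow> \<Phi> T = \<Psi> T) \<Longrightarrow> lin \<Phi> c = lin \<Psi> c"
  unfolding lin_def by (intro ext sum.cong) auto

lemma lin_add_fun: "lin (\<lambda>T S. \<Phi> T S + \<Psi> T S) c S = lin \<Phi> c S + lin \<Psi> c S"
  unfolding lin_def by (simp add: distrib_left sum.distrib)

lemma lin_zero: "lin \<Phi> (\<lambda>T. 0) = (\<lambda>S. 0)"
  unfolding lin_def by simp

lemma lin_lincomb:
  assumes "finite {T. c T \<noteq> 0}" "finite {T. d T \<noteq> 0}"
  shows "lin \<Phi> (\<lambda>T. a * c T + d T) S = a * lin \<Phi> c S + lin \<Phi> d S"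
proof -
  let ?F = "{T. c T \<noteq> 0} \<union> {T. d T \<noteq> 0}"
  have f: "finite ?F" using assms by simp
  have "lin \<Phi> (\<lambda>T. a * c T + d T) S = (\<Sum>T\<in>?F. (a * c T + d T) * \<Phi> T S)"
    by (rule lin_sup[OF f]) auto
  moreover have "lin \<Phi> c S = (\<Sum>T\<in>?F. c T * \<Phi> T S)" by (rule lin_sup[OF f]) auto
  moreover have "lin \<Phi> d S = (\<Sum>T\<in>?F. d T * \<Phi> T S)" by (rule lin_sup[OF f]) auto
  ultimately show ?thesis
    by (simp add: distrib_right sum.distrib sum_distrib_left mult.assoc)
qed

lemma cube_bd_fsum:
  "cube_bd L m n T = fsum ({1..n}\<times>{0..L}) (\<lambda>(j,i). (- 1) ^ (j + 1) * m i) (\<lambda>(j,i). face L n i j T)"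
  unfolding cube_bd_def fsum_def dl_def
  by (auto simp: sum.cartesian_product intro!: ext sum.cong)

lemma chain_bd_lin: "chain_bd L m (Suc n) c = lin (cube_bd L m (Suc n)) c"
  unfolding chain_bd_def lin_def by simp

lemma chain_map_lin:
  assumes "finite {T. c T \<noteq> 0}"
  shows "chain_map n f c = lin (\<lambda>T. dl (restrict (f \<circ> T) (unit_cube n))) c"
proof
  fix S
  have "chain_map n f c S = (\<Sum>T\<in>{T\<in>{T. c T \<noteq> 0}. restrict (f \<circ> T) (unit_cube n) = S}. c T)"
    by (simp add: chain_map_def)
  also have "\<dots> = (\<Sum>T\<in>{T. c T \<noteq> 0}. if restrict (f \<circ> T) (unit_cube n) = S then c T else 0)"
    using assms by (rule sum.inter_filter)
  also have "\<dots> = lin (\<lambda>T. dl (restrict (f \<circ> T) (unit_cube n))) c S"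
    unfolding lin_def dl_def by (intro sum.cong) auto
  finally show "chain_map n f c S = lin (\<lambda>T. dl (restrict (f \<circ> T) (unit_cube n))) c S" .
qed

definition trunc :: "nat \<Rightarrow> (nat \<Rightarrow> real) \<Rightarrow> nat \<Rightarrow> real" where
  "trunc n x = (\<lambda>k. if k < n then x k else 0)"

definition pushf :: "nat \<Rightarrow> ('a \<Rightarrow> 'b) \<Rightarrow> ((nat \<Rightarrow> real) \<Rightarrow> 'a) \<Rightarrow> (nat \<Rightarrow> real) \<Rightarrow> 'b" where
  "pushf n f T = restrict (f \<circ> T) (unit_cube n)"

definition prism :: "nat \<Rightarrow> (real \<times> 'a \<Rightarrow> 'b) \<Rightarrow> (real \<Rightarrow> real) \<Rightarrow> ((nat \<Rightarrow> real) \<Rightarrow> 'a) \<Rightarrow> (nat \<Rightarrow> real) \<Rightarrow> 'b" where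
  "prism n H s T = restrict (\<lambda>x. H (s (x n), T (trunc n x))) (unit_cube (Suc n))"

lemma frac_bounds: "i \<le> L \<Longrightarrow> 0 \<le> real i / real L \<and> real i / real L \<le> 1"
  by (cases "L = 0") (auto simp: divide_le_eq_1)

lemma ins_in_cube:
  assumes "x \<in> unit_cube (n - 1)" "1 \<le> j" "j \<le> n" "0 \<le> t" "t \<le> 1"
  shows "(\<lambda>k. if k < j - 1 then x k else if k = j - 1 then t else x (k - 1)) \<in> unit_cube n"
  using assms unfolding unit_cube_def by auto

lemma face_push:
  assumes "1 \<le> j" "j \<le> n" "i \<le> L"
  shows "face L n i j (pushf n f T) = pushf (n - 1) f (face L n i j T)"
proof
  fix x
  show "face L n i j (pushf n f T) x = pushf (n - 1) f (face L n i j T) x"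
  proof (cases "x \<in> unit_cube (n - 1)")
    case True
    then show ?thesis
      using ins_in_cube[OF True assms(1,2)] frac_bounds[OF assms(3)]
      by (simp add: face_def pushf_def)
  qed (simp add: face_def pushf_def)
qed

lemma face_prism_low:
  assumes "1 \<le> j" "j \<le> n" "i \<le> L"
  shows "face L (Suc n) i j (prism n H s T) = prism (n - 1) H s (face L n i j T)"
proof
  fix x
  show "face L (Suc n) i j (prism n H s T) x = prism (n - 1) H s (face L n i j T) x"
  proof (cases "x \<in> unit_cube n")
    case True
    have n1: "Suc (n - 1) = n" using assms by simp
    have i1: "(\<lambda>k. if k < j - 1 then x k else if k = j - 1 then real i / real L else x (k - 1)) \<in> unit_cube (Suc n)"
      using ins_in_cube[of x "Suc n" j] True assms frac_bounds[OF assms(3)] by simp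
    have t1: "trunc (n - 1) x \<in> unit_cube (n - 1)"
      using True unfolding unit_cube_def trunc_def by auto
    have e1: "trunc n (\<lambda>k. if k < j - 1 then x k else if k = j - 1 then real i / real L else x (k - 1))
        = (\<lambda>k. if k < j - 1 then trunc (n - 1) x k else if k = j - 1 then real i / real L else trunc (n - 1) x (k - 1))"
      using assms True unfolding trunc_def unit_cube_def by (auto intro!: ext)
    have e2: "(if n < j - 1 then x n else if n = j - 1 then real i / real L else x (n - 1)) = x (n - 1)"
      using assms by auto
    show ?thesis
      using True i1 t1 e1 e2 n1 by (simp add: face_def prism_def del: One_nat_def)
  next
    case False
    have n1: "Suc (n - 1) = n" using assms by simp
    show ?thesis using False n1 by (simp add: face_def prism_def del: One_nat_def)
  qed
qed

lemma face_prism_top: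
  assumes "i \<le> L"
  shows "face L (Suc n) i (Suc n) (prism n H s T) = pushf n (\<lambda>y. H (s (real i / real L), y)) T"
proof
  fix x
  show "face L (Suc n) i (Suc n) (prism n H s T) x = pushf n (\<lambda>y. H (s (real i / real L), y)) T x"
  proof (cases "x \<in> unit_cube n")
    case True
    have i1: "(\<lambda>k. if k < Suc n - 1 then x k else if k = Suc n - 1 then real i / real L else x (k - 1)) \<in> unit_cube (Suc n)"
      using ins_in_cube[of x "Suc n" "Suc n"] True frac_bounds[OF assms] by simp
    have e1: "trunc n (\<lambda>k. if k < Suc n - 1 then x k else if k = Suc n - 1 then real i / real L else x (k - 1)) = x"
      using True unfolding trunc_def unit_cube_def by (auto intro!: ext)
    show ?thesis
      using True i1 e1 by (simp add: face_def prism_def pushf_def)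
  qed (simp add: face_def prism_def pushf_def)
qed

lemma top_cube[simp]: "topspace (subtopology (powertop_real UNIV) (unit_cube n)) = unit_cube n"
  by simp

lemma sing_push:
  assumes "continuous_map X Y f" "sing_cube n X T"
  shows "sing_cube n Y (pushf n f T)"
proof -
  have "continuous_map (subtopology (powertop_real UNIV) (unit_cube n)) Y (f \<circ> T)"
    using assms unfolding sing_cube_def using continuous_map_compose by blast
  then show ?thesis unfolding sing_cube_def pushf_def by simp
qed

lemma cont_trunc:
  "continuous_map (subtopology (powertop_real UNIV) (unit_cube (Suc n)))
     (subtopology (powertop_real UNIV) (unit_cube n)) (trunc n)"
proof (rule continuous_map_into_subtopology)
  show "continuous_map (subtopology (powertop_real UNIV) (unit_cube (Suc n))) (powertop_real UNIV) (trunc n)"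
    unfolding continuous_map_componentwise_UNIV trunc_def
  proof
    fix k
    show "continuous_map (subtopology (powertop_real UNIV) (unit_cube (Suc n))) euclideanreal
        (\<lambda>x. if k < n then x k else 0)"
      by (cases "k < n") (auto intro: continuous_map_from_subtopology continuous_map_product_projection)
  qed
  show "trunc n \<in> topspace (subtopology (powertop_real UNIV) (unit_cube (Suc n))) \<rightarrow> unit_cube n"
    by (auto simp: trunc_def unit_cube_def)
qed

lemma sing_prism:
  assumes T: "sing_cube n X T" and H: "continuous_map (prod_topology (top_of_set {0..1}) X) Y H"
    and s: "continuous_map euclideanreal euclideanreal s" "\<And>t. s t \<in> {0..1}"
  shows "sing_cube (Suc n) Y (prism n H s T)"
proof -
  let ?C = "subtopology (powertop_real UNIV) (unit_cube (Suc n))"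
  have c1: "continuous_map ?C euclideanreal (\<lambda>x. x n)"
    by (auto intro: continuous_map_from_subtopology continuous_map_product_projection)
  have c2: "continuous_map ?C (top_of_set {0..1}) (\<lambda>x. s (x n))"
    apply (rule continuous_map_into_subtopology)
    using continuous_map_compose[OF c1 s(1)] s(2) by (auto simp: o_def)
  have c3: "continuous_map ?C X (\<lambda>x. T (trunc n x))"
    using continuous_map_compose[OF cont_trunc] T unfolding sing_cube_def by (auto simp: o_def)
  have "continuous_map ?C Y (\<lambda>x. H (s (x n), T (trunc n x)))"
    using continuous_map_compose[OF continuous_map_pairedI[OF c2 c3] H] by (simp add: o_def)
  then show ?thesis unfolding sing_cube_def prism_def by simp
qed

lemma chain_fin: "chain n X c \<Longrightarrow> finite {T. c T \<noteq> 0}"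
  by (simp add: chain_def)

lemma finite_cube_bd: "finite {S. cube_bd L m n T S \<noteq> 0}"
  unfolding cube_bd_fsum by (rule finite_fsum) simp

lemma finite_dl: "finite {S. dl U S \<noteq> 0}"
  by (rule finite_subset[of _ "{U}"]) (auto simp: dl_def split: if_splits)

lemma finite_chain_bd: "finite {T. c T \<noteq> 0} \<Longrightarrow> finite {S. chain_bd L m (Suc n) c S \<noteq> 0}"
  unfolding chain_bd_lin by (rule finite_lin) (auto simp: finite_cube_bd)

lemma lin_nz:
  assumes "lin \<Phi> c S \<noteq> 0"
  obtains T where "c T \<noteq> 0" "\<Phi> T S \<noteq> 0"
proof -
  have S: "S \<in> {S. lin \<Phi> c S \<noteq> 0}" using assms by simp
  have "S \<in> (\<Union>T\<in>{T. c T \<noteq> 0}. {S. \<Phi> T S \<noteq> 0})" by (rule subsetD[OF supp_lin S])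
  then show ?thesis using that by blast
qed

lemma chain_lin_dl:
  fixes c :: "((nat \<Rightarrow> real) \<Rightarrow> 'a) \<Rightarrow> 'r::comm_ring_1"
  assumes "chain n X c" "\<And>T. sing_cube n X T \<Longrightarrow> sing_cube k Y (F T)"
  shows "chain k Y (lin (\<lambda>T. dl (F T)) c)"
  unfolding chain_def
proof
  show "finite {T. lin (\<lambda>T. dl (F T)) c T \<noteq> 0}"
    using assms(1) by (intro finite_lin) (auto simp: chain_def finite_dl)
  show "\<forall>T. lin (\<lambda>T. dl (F T)) c T \<noteq> 0 \<longrightarrow> sing_cube k Y T"
  proof (intro allI impI)
    fix S assume "lin (\<lambda>T. dl (F T)) c S \<noteq> 0"
    then obtain T where "c T \<noteq> 0" "dl (F T) S \<noteq> (0::'r)" by (rule lin_nz)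
    then show "sing_cube k Y S" using assms unfolding chain_def dl_def by (auto split: if_splits)
  qed
qed

lemma chain_map_chain:
  assumes "chain n X c" "continuous_map X Y f"
  shows "chain n Y (chain_map n f c)"
  unfolding chain_map_lin[OF chain_fin[OF assms(1)]]
  using chain_lin_dl[OF assms(1), of n Y "pushf n f"] sing_push[OF assms(2)]
  by (simp add: pushf_def)

lemma naturality:
  assumes w: "chain (Suc n) X w"
  shows "chain_map n f (chain_bd L m (Suc n) w) = chain_bd L m (Suc n) (chain_map (Suc n) f w)"
proof -
  have fw: "finite {T. w T \<noteq> 0}" using w by (simp add: chain_def)
  have "chain_map n f (chain_bd L m (Suc n) w)
     = lin (\<lambda>T. dl (pushf n f T)) (lin (cube_bd L m (Suc n)) w)"
    using chain_map_lin[OF finite_chain_bd[OF fw], of n f L m] by (simp add: chain_bd_lin pushf_def)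
  also have "\<dots> = lin (\<lambda>T. lin (\<lambda>U. dl (pushf n f U)) (cube_bd L m (Suc n) T)) w"
    by (rule lin_comp[OF fw finite_cube_bd])
  also have "\<dots> = lin (\<lambda>T. cube_bd L m (Suc n) (pushf (Suc n) f T)) w"
  proof (rule lin_cong, rule ext)
    fix T S
    have "lin (\<lambda>U. dl (pushf n f U)) (cube_bd L m (Suc n) T) S
      = (\<Sum>k\<in>{1..Suc n}\<times>{0..L}. (case k of (j,i) \<Rightarrow> (- 1) ^ (j + 1) * m i) *
            dl (pushf n f (case k of (j,i) \<Rightarrow> face L (Suc n) i j T)) S)"
      unfolding cube_bd_fsum by (rule lin_fsum) simp
    also have "\<dots> = (\<Sum>k\<in>{1..Suc n}\<times>{0..L}. (case k of (j,i) \<Rightarrow> (- 1) ^ (j + 1) * m i) *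
            dl (case k of (j,i) \<Rightarrow> face L (Suc n) i j (pushf (Suc n) f T)) S)"
      by (intro sum.cong refl) (auto simp: face_push)
    also have "\<dots> = cube_bd L m (Suc n) (pushf (Suc n) f T) S"
      unfolding cube_bd_fsum fsum_def ..
    finally show "lin (\<lambda>U. dl (pushf n f U)) (cube_bd L m (Suc n) T) S = cube_bd L m (Suc n) (pushf (Suc n) f T) S" .
  qed
  also have "\<dots> = lin (\<lambda>T. lin (cube_bd L m (Suc n)) (dl (pushf (Suc n) f T))) w"
    by (simp add: lin_dl)
  also have "\<dots> = lin (cube_bd L m (Suc n)) (lin (\<lambda>T. dl (pushf (Suc n) f T)) w)"
    by (rule lin_comp[symmetric, OF fw finite_dl])
  also have "\<dots> = chain_bd L m (Suc n) (chain_map (Suc n) f w)"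
    unfolding chain_map_lin[OF fw] chain_bd_lin pushf_def ..
  finally show ?thesis .
qed

lemma prism_cube:
  "cube_bd L m (Suc n) (prism n H s T) S =
     (\<Sum>j\<in>{1..n}. \<Sum>i\<in>{0..L}. (- 1) ^ (j + 1) * m i * dl (prism (n - 1) H s (face L n i j T)) S)
   + (- 1) ^ n * (\<Sum>i\<in>{0..L}. m i * dl (pushf n (\<lambda>y. H (s (real i / real L), y)) T) S)"
proof -
  have "cube_bd L m (Suc n) (prism n H s T) S =
     (\<Sum>j\<in>{1..n}. \<Sum>i\<in>{0..L}. (- 1) ^ (j + 1) * m i * (if face L (Suc n) i j (prism n H s T) = S then 1 else 0))
     + (\<Sum>i\<in>{0..L}. (- 1) ^ (Suc n + 1) * m i * (if face L (Suc n) i (Suc n) (prism n H s T) = S then 1 else 0))"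
    unfolding cube_bd_def by (simp add: sum.cl_ivl_Suc)
  also have "(\<Sum>j\<in>{1..n}. \<Sum>i\<in>{0..L}. (- 1) ^ (j + 1) * m i * (if face L (Suc n) i j (prism n H s T) = S then 1 else 0))
     = (\<Sum>j\<in>{1..n}. \<Sum>i\<in>{0..L}. (- 1) ^ (j + 1) * m i * dl (prism (n - 1) H s (face L n i j T)) S)"
    by (intro sum.cong refl) (auto simp: face_prism_low dl_def)
  also have "(\<Sum>i\<in>{0..L}. (- 1) ^ (Suc n + 1) * m i * (if face L (Suc n) i (Suc n) (prism n H s T) = S then 1 else 0))
     = (- 1) ^ n * (\<Sum>i\<in>{0..L}. m i * dl (pushf n (\<lambda>y. H (s (real i / real L), y)) T) S)"
    by (auto simp: sum_distrib_left face_prism_top dl_def intro!: sum.cong)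
  finally show ?thesis .
qed

lemma prism_chain:
  assumes z: "chain n X z" and cyc: "chain_bd L m n z = (\<lambda>S. 0)"
  shows "chain_bd L m (Suc n) (lin (\<lambda>T. dl (prism n H s T)) z) =
    (\<lambda>S. (- 1) ^ n * (\<Sum>i\<in>{0..L}. m i * chain_map n (\<lambda>y. H (s (real i / real L), y)) z S))"
proof
  fix S
  have fz: "finite {T. z T \<noteq> 0}" using z by (simp add: chain_def)
  define A where "A = (\<lambda>T S. (\<Sum>j\<in>{1..n}. \<Sum>i\<in>{0..L}. (- 1) ^ (j + 1) * m i * dl (prism (n - 1) H s (face L n i j T)) S))"
  define B where "B = (\<lambda>T S. (- 1) ^ n * (\<Sum>i\<in>{0..L}. m i * dl (pushf n (\<lambda>y. H (s (real i / real L), y)) T) S))"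
  have "chain_bd L m (Suc n) (lin (\<lambda>T. dl (prism n H s T)) z) S
      = lin (\<lambda>T. lin (cube_bd L m (Suc n)) (dl (prism n H s T))) z S"
    unfolding chain_bd_lin by (subst lin_comp[OF fz finite_dl]) rule
  also have "\<dots> = lin (\<lambda>T S. A T S + B T S) z S"
    by (simp add: lin_dl prism_cube A_def B_def)
  also have "\<dots> = lin A z S + lin B z S" by (rule lin_add_fun)
  also have "lin A z S = 0"
  proof (cases n)
    case 0
    then show ?thesis by (simp add: A_def lin_def)
  next
    case (Suc n')
    have "lin A z = lin (\<lambda>T. lin (\<lambda>U. dl (prism n' H s U)) (cube_bd L m n T)) z"
    proof (rule lin_cong, rule ext)
      fix T S
      have "lin (\<lambda>U. dl (prism n' H s U)) (cube_bd L m n T) S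
        = (\<Sum>k\<in>{1..n}\<times>{0..L}. (case k of (j,i) \<Rightarrow> (- 1) ^ (j + 1) * m i) *
            dl (prism n' H s (case k of (j,i) \<Rightarrow> face L n i j T)) S)"
        unfolding cube_bd_fsum by (rule lin_fsum) simp
      also have "\<dots> = A T S" unfolding A_def using Suc
        by (simp add: sum.cartesian_product split_def)
      finally show "A T S = lin (\<lambda>U. dl (prism n' H s U)) (cube_bd L m n T) S" by simp
    qed
    also have "\<dots> = lin (\<lambda>U. dl (prism n' H s U)) (lin (cube_bd L m n) z)"
      by (rule lin_comp[symmetric, OF fz finite_cube_bd])
    also have "lin (cube_bd L m n) z = chain_bd L m n z"
      by (simp only: Suc chain_bd_lin)
    finally show ?thesis using cyc by (simp add: lin_zero)
  qed
  also have "lin B z S = (- 1) ^ n * (\<Sum>i\<in>{0..L}. m i * chain_map n (\<lambda>y. H (s (real i / real L), y)) z S)"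
    unfolding B_def chain_map_lin[OF fz] lin_def pushf_def
    by (simp add: sum_distrib_left sum.swap[of _ "{T. z T \<noteq> 0}"] mult.assoc mult.left_commute)
  finally show "chain_bd L m (Suc n) (lin (\<lambda>T. dl (prism n H s T)) z) S =
    (- 1) ^ n * (\<Sum>i\<in>{0..L}. m i * chain_map n (\<lambda>y. H (s (real i / real L), y)) z S)" by simp
qed

lemma bI: "chain (Suc n) Y c \<Longrightarrow> chain_bd L m (Suc n) c = b \<Longrightarrow> b \<in> boundaries L m n Y"
  unfolding boundaries_def by blast

lemma hI: "b \<in> boundaries L m n Y \<Longrightarrow> u = (\<lambda>S. v S + b S) \<Longrightarrow> u \<in> hclass L m n Y v"
  unfolding hclass_def by blast

lemma B0: "(\<lambda>S. 0) \<in> boundaries L m n Y"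
proof -
  have "chain (Suc n) Y (\<lambda>T. 0)" by (simp add: chain_def)
  moreover have "chain_bd L m (Suc n) (\<lambda>T. 0) = (\<lambda>S. 0)" by (simp add: chain_bd_lin lin_zero)
  ultimately show ?thesis by (rule bI)
qed

lemma Blin:
  assumes "b1 \<in> boundaries L m n Y" "b2 \<in> boundaries L m n Y"
  shows "(\<lambda>S. a * b1 S + b2 S) \<in> boundaries L m n Y"
proof -
  obtain c1 where c1: "chain (Suc n) Y c1" "b1 = chain_bd L m (Suc n) c1"
    using assms(1) by (auto simp: boundaries_def)
  obtain c2 where c2: "chain (Suc n) Y c2" "b2 = chain_bd L m (Suc n) c2"
    using assms(2) by (auto simp: boundaries_def)
  let ?c = "\<lambda>T. a * c1 T + c2 T"
  have ch: "chain (Suc n) Y ?c"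
    unfolding chain_def
  proof
    show "finite {T. a * c1 T + c2 T \<noteq> 0}"
      by (rule finite_subset[of _ "{T. c1 T \<noteq> 0} \<union> {T. c2 T \<noteq> 0}"])
        (use c1 c2 in \<open>auto simp: chain_def\<close>)
    show "\<forall>T. a * c1 T + c2 T \<noteq> 0 \<longrightarrow> sing_cube (Suc n) Y T"
    proof (intro allI impI)
      fix T assume "a * c1 T + c2 T \<noteq> 0"
      then have "c1 T \<noteq> 0 \<or> c2 T \<noteq> 0" by auto
      then show "sing_cube (Suc n) Y T" using c1 c2 by (auto simp: chain_def)
    qed
  qed
  have "chain_bd L m (Suc n) ?c = (\<lambda>S. a * b1 S + b2 S)"
    unfolding c1 c2 chain_bd_lin
    by (rule ext, rule lin_lincomb) (use c1 c2 in \<open>auto simp: chain_def\<close>)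
  then show ?thesis using ch by (intro bI)
qed

lemma Bsum:
  assumes "finite K" "\<And>k. k \<in> K \<Longrightarrow> b k \<in> boundaries L m n Y"
  shows "(\<lambda>S. \<Sum>k\<in>K. a k * b k S) \<in> boundaries L m n Y"
  using assms
proof (induction K rule: finite_induct)
  case empty
  then show ?case using B0 by simp
next
  case (insert x F)
  then have "(\<lambda>S. a x * b x S + (\<Sum>k\<in>F. a k * b k S)) \<in> boundaries L m n Y"
    by (intro Blin) auto
  then show ?case using insert by simp
qed

lemma hclass_eq:
  assumes "(\<lambda>S. u S - v S) \<in> boundaries L m n Y"
  shows "hclass L m n Y u = hclass L m n Y v"
proof -
  have 1: "(\<lambda>S. u S + b S) \<in> hclass L m n Y v" if "b \<in> boundaries L m n Y" for b
  proof -
    have "(\<lambda>S. 1 * (u S - v S) + b S) \<in> boundaries L m n Y" by (rule Blin[OF assms that])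
    moreover have "(\<lambda>S. u S + b S) = (\<lambda>S. v S + (1 * (u S - v S) + b S))" by auto
    ultimately show ?thesis by (rule hI)
  qed
  have 2: "(\<lambda>S. v S + b S) \<in> hclass L m n Y u" if "b \<in> boundaries L m n Y" for b
  proof -
    have "(\<lambda>S. (-1) * (u S - v S) + b S) \<in> boundaries L m n Y" by (rule Blin[OF assms that])
    moreover have "(\<lambda>S. v S + b S) = (\<lambda>S. u S + ((-1) * (u S - v S) + b S))" by auto
    ultimately show ?thesis by (rule hI)
  qed
  show ?thesis
  proof
    show "hclass L m n Y u \<subseteq> hclass L m n Y v" using 1 unfolding hclass_def[of L m n Y u] by blast
    show "hclass L m n Y v \<subseteq> hclass L m n Y u" using 2 unfolding hclass_def[of L m n Y v] by blast
  qed
qed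

definition tent :: "nat \<Rightarrow> nat \<Rightarrow> real \<Rightarrow> real" where
  "tent L k t = max 0 (1 - \<bar>real L * t - real k\<bar>)"

lemma tent_cont: "continuous_map euclideanreal euclideanreal (tent L k)"
  unfolding continuous_map_iff_continuous2 tent_def by (intro continuous_intros)

lemma tent_range: "tent L k t \<in> {0..1}"
  unfolding tent_def by auto

lemma tent_val:
  assumes "i \<le> L" "k \<le> L"
  shows "tent L k (real i / real L) = (if i = k then 1 else 0)"
proof (cases "L = 0")
  case True
  then show ?thesis using assms by (simp add: tent_def)
next
  case False
  then have "real L * (real i / real L) = real i" by simp
  then show ?thesis unfolding tent_def by auto
qed

lemma sum_pick:
  fixes m :: "nat \<Rightarrow> 'r::comm_ring_1"
  assumes "finite K" "k \<in> K"
  shows "(\<Sum>i\<in>K. m i * (if i = k then a else b)) - (\<Sum>i\<in>K. m i * b) = m k * (a - b)"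
proof -
  have "(\<Sum>i\<in>K. m i * (if i = k then a else b)) = (\<Sum>i\<in>K. m i * b + (if i = k then m i * (a - b) else 0))"
    by (intro sum.cong) (auto simp: algebra_simps)
  also have "\<dots> = (\<Sum>i\<in>K. m i * b) + m k * (a - b)"
    using assms by (simp add: sum.distrib sum.delta)
  finally show ?thesis by simp
qed

lemma chain_map_add:
  assumes "finite {T. c T \<noteq> 0}" "finite {T. d T \<noteq> 0}"
  shows "chain_map n f (\<lambda>T. c T + d T) S = chain_map n f c S + chain_map n f d S"
proof -
  have f: "finite {T. c T + d T \<noteq> 0}"
    by (rule finite_subset[of _ "{T. c T \<noteq> 0} \<union> {T. d T \<noteq> 0}"]) (use assms in auto)
  show ?thesis
    using lin_lincomb[OF assms, of _ 1 S]
    by (simp add: chain_map_lin[OF f] chain_map_lin[OF assms(1)] chain_map_lin[OF assms(2)])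
qed

lemma cont_end:
  assumes "continuous_map (prod_topology (top_of_set {0..1}) X) Y H" "t \<in> {0..1}"
  shows "continuous_map X Y (\<lambda>x. H (t, x))"
proof -
  have "continuous_map X (prod_topology (top_of_set {0..1}) X) (\<lambda>x. (t, x))"
    using assms(2) by (intro continuous_map_pairedI) (auto simp: continuous_map_const)
  then show ?thesis using continuous_map_compose[OF _ assms(1)] by (simp add: o_def)
qed

lemma forward:
  fixes m :: "nat \<Rightarrow> 'r::comm_ring_1"
  assumes "\<exists>r. (\<Sum>k\<in>{0..L}. r k * m k) = 1"
  shows "homotopy_axiom TYPE('a) TYPE('b) L m"
  unfolding homotopy_axiom_def
proof (intro allI impI ballI)
  fix X :: "'a topology" and Y :: "'b topology" and f g n C
  assume hom: "homotopic_with (\<lambda>_. True) X Y f g" and C: "C \<in> homology L m n X"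
  obtain r where r: "(\<Sum>k\<in>{0..L}. r k * m k) = 1" using assms by blast
  obtain H where H: "continuous_map (prod_topology (top_of_set {0..1::real}) X) Y H"
     "\<And>x. H (0, x) = f x" "\<And>x. H (1, x) = g x"
    using hom unfolding homotopic_with_def by blast
  have cf: "continuous_map X Y f" using cont_end[OF H(1), of 0] H(2) by simp
  have cg: "continuous_map X Y g" using cont_end[OF H(1), of 1] H(3) by simp
  obtain z where z: "chain n X z" "chain_bd L m n z = (\<lambda>S. 0)" and Cz: "C = hclass L m n X z"
    using C unfolding homology_def cycles_def by blast
  have fz: "finite {T. z T \<noteq> 0}" using z by (simp add: chain_def)
  define fz' where "fz' = chain_map n f z"
  define gz' where "gz' = chain_map n g z"
  define D where "D = (\<lambda>S. gz' S - fz' S)"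
  have Pk: "(\<lambda>S. (- 1) ^ n * (\<Sum>i\<in>{0..L}. m i * chain_map n (\<lambda>y. H (s (real i / real L), y)) z S))
      \<in> boundaries L m n Y"
    if s: "continuous_map euclideanreal euclideanreal s" "\<And>t. s t \<in> {0..1}" for s
  proof -
    have "chain (Suc n) Y (lin (\<lambda>T. dl (prism n H s T)) z)"
      by (rule chain_lin_dl[OF z(1)]) (rule sing_prism[OF _ H(1) s])
    then show ?thesis
      by (rule bI) (rule prism_chain[OF z])
  qed
  have sgn: "((- 1) ^ n * (- 1) ^ n :: 'r) = 1" by (simp flip: power_add)
  have mD: "(\<lambda>S. m k * D S) \<in> boundaries L m n Y" if k: "k \<in> {0..L}" for k
  proof -
    have P1: "(\<lambda>S. (- 1) ^ n * (\<Sum>i\<in>{0..L}. m i * (if i = k then gz' S else fz' S))) \<in> boundaries L m n Y"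
    proof -
      have "(\<Sum>i\<in>{0..L}. m i * chain_map n (\<lambda>y. H (tent L k (real i / real L), y)) z S)
          = (\<Sum>i\<in>{0..L}. m i * (if i = k then gz' S else fz' S))" for S
        by (intro sum.cong refl) (use k in \<open>auto simp: tent_val H(2,3) gz'_def fz'_def\<close>)
      then show ?thesis using Pk[OF tent_cont tent_range, of L k] by simp
    qed
    have P0: "(\<lambda>S. (- 1) ^ n * (\<Sum>i\<in>{0..L}. m i * fz' S)) \<in> boundaries L m n Y"
      using Pk[of "\<lambda>t. 0"] by (simp add: H(2) fz'_def)
    have "(\<lambda>S. (- 1) ^ n * ((- 1) ^ n * (\<Sum>i\<in>{0..L}. m i * (if i = k then gz' S else fz' S)))
            + ((- ((- 1) ^ n)) * ((- 1) ^ n * (\<Sum>i\<in>{0..L}. m i * fz' S)) + 0)) \<in> boundaries L m n Y"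
      by (intro Blin P1 P0 B0)
    moreover have "(\<lambda>S. (- 1) ^ n * ((- 1) ^ n * (\<Sum>i\<in>{0..L}. m i * (if i = k then gz' S else fz' S)))
            + ((- ((- 1) ^ n)) * ((- 1) ^ n * (\<Sum>i\<in>{0..L}. m i * fz' S)) + 0)) = (\<lambda>S. m k * D S)"
    proof
      fix S
      have "(- 1) ^ n * ((- 1) ^ n * (\<Sum>i\<in>{0..L}. m i * (if i = k then gz' S else fz' S)))
            + ((- ((- 1) ^ n)) * ((- 1) ^ n * (\<Sum>i\<in>{0..L}. m i * fz' S)) + 0)
          = (\<Sum>i\<in>{0..L}. m i * (if i = k then gz' S else fz' S)) - (\<Sum>i\<in>{0..L}. m i * fz' S)"
        by (simp add: mult.assoc[symmetric] sgn)
      also have "\<dots> = m k * D S" unfolding D_def by (rule sum_pick) (use k in auto)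
      finally show "(- 1) ^ n * ((- 1) ^ n * (\<Sum>i\<in>{0..L}. m i * (if i = k then gz' S else fz' S)))
            + ((- ((- 1) ^ n)) * ((- 1) ^ n * (\<Sum>i\<in>{0..L}. m i * fz' S)) + 0) = m k * D S" .
    qed
    ultimately show ?thesis by simp
  qed
  have DB: "D \<in> boundaries L m n Y"
  proof -
    have "(\<lambda>S. \<Sum>k\<in>{0..L}. r k * (m k * D S)) \<in> boundaries L m n Y"
      by (rule Bsum[where b="\<lambda>k S. m k * D S"]) (auto intro: mD)
    moreover have "(\<lambda>S. \<Sum>k\<in>{0..L}. r k * (m k * D S)) = D"
    proof
      fix S
      have "(\<Sum>k\<in>{0..L}. r k * (m k * D S)) = (\<Sum>k\<in>{0..L}. r k * m k) * D S"
        by (simp add: sum_distrib_right mult.assoc)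
      then show "(\<Sum>k\<in>{0..L}. r k * (m k * D S)) = D S" using r by simp
    qed
    ultimately show ?thesis by simp
  qed
  have zC: "z \<in> C" unfolding Cz by (rule hI[OF B0]) simp
  define z' where "z' = (SOME z. z \<in> C)"
  have "z' \<in> C" unfolding z'_def using zC by (rule someI[where P="\<lambda>z. z \<in> C"])
  then obtain b where b: "b \<in> boundaries L m n X" and z'b: "z' = (\<lambda>S. z S + b S)"
    unfolding Cz hclass_def by blast
  obtain w where w: "chain (Suc n) X w" "b = chain_bd L m (Suc n) w"
    using b unfolding boundaries_def by blast
  have fb: "finite {T. b T \<noteq> 0}" using w finite_chain_bd chain_fin by blast
  have Ef: "chain_map n f b \<in> boundaries L m n Y"
    unfolding w(2) naturality[OF w(1)] using chain_map_chain[OF w(1) cf] by (rule bI) (rule refl)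
  have Eg: "chain_map n g b \<in> boundaries L m n Y"
    unfolding w(2) naturality[OF w(1)] using chain_map_chain[OF w(1) cg] by (rule bI) (rule refl)
  have "(\<lambda>S. (-1) * D S + (1 * chain_map n f b S + ((-1) * chain_map n g b S + 0))) \<in> boundaries L m n Y"
    by (intro Blin DB Ef Eg B0)
  moreover have "(\<lambda>S. (-1) * D S + (1 * chain_map n f b S + ((-1) * chain_map n g b S + 0)))
      = (\<lambda>S. chain_map n f z' S - chain_map n g z' S)"
    unfolding z'b D_def fz'_def gz'_def
    by (auto simp: chain_map_add[OF fz fb])
  ultimately have "hclass L m n Y (chain_map n f z') = hclass L m n Y (chain_map n g z')"
    by (intro hclass_eq) simp
  then show "hom_map L m n Y f C = hom_map L m n Y g C"
    unfolding hom_map_def z'_def .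
qed

lemma faceP:
  assumes U: "sing_cube 1 (subtopology euclideanreal {0::real}) U" and i: "i \<le> L"
  shows "face L 1 i 1 U = restrict (\<lambda>x. 0::real) (unit_cube 0)"
proof
  fix x :: "nat \<Rightarrow> real"
  show "face L 1 i 1 U x = restrict (\<lambda>x. 0::real) (unit_cube 0) x"
  proof (cases "x \<in> unit_cube 0")
    case True
    have ins: "(\<lambda>k. if k < 1 - 1 then x k else if k = 1 - 1 then real i / real L else x (k - 1)) \<in> unit_cube 1"
      using ins_in_cube[of x 1 1] True frac_bounds[OF i] by simp
    have "U \<in> unit_cube 1 \<rightarrow> {0}"
      using U unfolding sing_cube_def continuous_map_def by simp
    then have "U (\<lambda>k. if k < 1 - 1 then x k else if k = 1 - 1 then real i / real L else x (k - 1)) = 0"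
      using ins by blast
    then show ?thesis using True by (simp add: face_def)
  qed (simp add: face_def)
qed

lemma backward:
  fixes m :: "nat \<Rightarrow> 'r::comm_ring_1"
  assumes ax: "homotopy_axiom TYPE(real) TYPE(real) L m"
  shows "\<exists>r. (\<Sum>k\<in>{0..L}. r k * m k) = 1"
proof (rule ccontr)
  assume nI: "\<not> (\<exists>r. (\<Sum>k\<in>{0..L}. r k * m k) = 1)"
  define I where "I = {x. \<exists>r. x = (\<Sum>k\<in>{0..L}. r k * m k)}"
  have I0: "0 \<in> I" unfolding I_def by (rule CollectI, rule exI[of _ "\<lambda>k. 0"]) simp
  have Iadd: "a + b \<in> I" if ab: "a \<in> I" "b \<in> I" for a b
  proof -
    obtain ra rb where "a = (\<Sum>k\<in>{0..L}. ra k * m k)" "b = (\<Sum>k\<in>{0..L}. rb k * m k)"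
      using ab unfolding I_def by blast
    then have "a + b = (\<Sum>k\<in>{0..L}. (ra k + rb k) * m k)"
      by (simp add: sum.distrib distrib_right)
    then show ?thesis unfolding I_def by (intro CollectI exI[of _ "\<lambda>k. ra k + rb k"]) simp
  qed
  have Imul: "c * a \<in> I" if a: "a \<in> I" for a c
  proof -
    obtain ra where "a = (\<Sum>k\<in>{0..L}. ra k * m k)"
      using a unfolding I_def by blast
    then have "c * a = (\<Sum>k\<in>{0..L}. (c * ra k) * m k)"
      by (simp add: sum_distrib_left mult.assoc)
    then show ?thesis unfolding I_def by (intro CollectI exI[of _ "\<lambda>k. c * ra k"]) simp
  qed
  have Im: "m i \<in> I" if "i \<le> L" for i
  proof -
    have "(\<Sum>k\<in>{0..L}. (if k = i then 1 else 0) * m k) = (\<Sum>k\<in>{0..L}. if k = i then m k else 0)"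
      by (intro sum.cong) auto
    also have "\<dots> = m i" using that by simp
    finally have "(\<Sum>k\<in>{0..L}. (if k = i then 1 else 0) * m k) = m i" .
    then show ?thesis unfolding I_def by (intro CollectI exI[of _ "\<lambda>k. if k = i then 1 else 0"]) simp
  qed
  have Isum: "sum f A \<in> I" if "\<And>x. x \<in> A \<Longrightarrow> f x \<in> I" for f :: "'z \<Rightarrow> 'r" and A
  proof (cases "finite A")
    case True
    then show ?thesis using that
      by (induction A rule: finite_induct) (auto intro: I0 Iadd)
  qed (simp add: I0)
  have Ibd: "chain_bd L m n c S \<in> I" for n c S
  proof (cases "n = 0")
    case True
    then show ?thesis by (simp add: chain_bd_def I0)
  next
    case False
    have "cube_bd L m n T S \<in> I" for T
      unfolding cube_bd_def
    proof (intro Isum)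
      fix j i assume "i \<in> {0..L}"
      then have "((- 1) ^ (j + 1) * (if face L n i j T = S then 1 else 0)) * m i \<in> I"
        by (intro Imul Im) simp
      then show "(- 1) ^ (j + 1) * m i * (if face L n i j T = S then 1 else 0) \<in> I"
        by (simp add: ac_simps)
    qed
    then show ?thesis using False unfolding chain_bd_def by (auto intro!: Isum Imul)
  qed
  have Ib: "b S \<in> I" if "b \<in> boundaries L m n Y" for b S and n and Y :: "'y topology"
    using that Ibd unfolding boundaries_def by blast
  define X where "X = subtopology euclideanreal {0::real}"
  define Y where "Y = (euclideanreal :: real topology)"
  define f where "f = (\<lambda>x::real. 0::real)"
  define g where "g = (\<lambda>x::real. 1::real)"
  define P where "P = restrict (\<lambda>x. 0::real) (unit_cube 0)"
  have hom: "homotopic_with (\<lambda>_. True) X Y f g"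
    unfolding homotopic_with_def
  proof (intro exI[of _ fst] conjI)
    show "continuous_map (prod_topology (top_of_set {0..1}) X) Y fst"
      unfolding Y_def using continuous_map_fst continuous_map_into_fulltopology by blast
  qed (auto simp: f_def g_def)
  have sP: "sing_cube 0 X P"
    unfolding sing_cube_def P_def X_def by (auto simp: continuous_map_const)
  define z :: "((nat \<Rightarrow> real) \<Rightarrow> real) \<Rightarrow> 'r" where "z = dl P"
  have zch: "chain 0 X z"
    unfolding chain_def z_def using finite_dl[of P] sP by (auto simp: dl_def split: if_splits)
  have zcyc: "z \<in> cycles L m 0 X"
    unfolding cycles_def using zch by (simp add: chain_bd_def)
  define C where "C = hclass L m 0 X z"
  have C: "C \<in> homology L m 0 X" unfolding C_def homology_def using zcyc by blast
  have eq: "hom_map L m 0 Y f C = hom_map L m 0 Y g C"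
    using ax hom C unfolding homotopy_axiom_def by blast
  have zC: "z \<in> C" unfolding C_def by (rule hI[OF B0]) simp
  define z' where "z' = (SOME z. z \<in> C)"
  have "z' \<in> C" unfolding z'_def using zC by (rule someI[where P="\<lambda>z. z \<in> C"])
  then obtain b where b: "b \<in> boundaries L m 0 X" and z'b: "z' = (\<lambda>S. z S + b S)"
    unfolding C_def hclass_def by blast
  obtain w where w: "chain (Suc 0) X w" "b = chain_bd L m (Suc 0) w"
    using b unfolding boundaries_def by blast
  have "hclass L m 0 Y (chain_map 0 f z') = hclass L m 0 Y (chain_map 0 g z')"
    using eq unfolding hom_map_def z'_def .
  moreover have "chain_map 0 f z' \<in> hclass L m 0 Y (chain_map 0 f z')" by (rule hI[OF B0]) simp
  ultimately have "chain_map 0 f z' \<in> hclass L m 0 Y (chain_map 0 g z')" by simp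
  then obtain b' where b': "b' \<in> boundaries L m 0 Y" and
      fg: "chain_map 0 f z' = (\<lambda>S. chain_map 0 g z' S + b' S)"
    unfolding hclass_def by blast
  have g0: "chain_map 0 g z' P = 0"
  proof -
    have "restrict (g \<circ> T) (unit_cube 0) \<noteq> P" for T
    proof
      assume a: "restrict (g \<circ> T) (unit_cube 0) = P"
      have "(\<lambda>i. 0::real) \<in> unit_cube 0" by (simp add: unit_cube_def)
      then have "restrict (g \<circ> T) (unit_cube 0) (\<lambda>i. 0) = 1" "P (\<lambda>i. 0) = 0"
        by (simp_all add: g_def P_def)
      then show False using a by simp
    qed
    then show ?thesis by (simp add: chain_map_def)
  qed
  have supp: "z' T = 0" if "T \<noteq> P" for T
  proof -
    have "z T = 0" using that by (simp add: z_def dl_def)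
    moreover have "cube_bd L m (Suc 0) U T = 0" if "w U \<noteq> 0" for U
    proof -
      have "sing_cube 1 X U" using w(1) that by (simp add: chain_def)
      then have "face L (Suc 0) i (Suc 0) U = P" if "i \<le> L" for i
        using faceP[of U i L] that unfolding X_def P_def by simp
      then show ?thesis using \<open>T \<noteq> P\<close> by (simp add: cube_bd_def)
    qed
    then have "b T = 0" unfolding w(2) chain_bd_def by simp
    ultimately show ?thesis by (simp add: z'b)
  qed
  have f1: "chain_map 0 f z' P = z' P"
  proof -
    have "chain_map 0 f z' P = (\<Sum>T\<in>{T. z' T \<noteq> 0}. z' T)"
      by (simp add: chain_map_def f_def P_def o_def)
    also have "\<dots> = (\<Sum>T\<in>{P}. z' T)"
      by (rule sum.mono_neutral_left) (use supp in auto)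
    finally show ?thesis by simp
  qed
  have "z' P = 1 + b P" by (simp add: z'b z_def dl_def)
  moreover have "chain_map 0 f z' P = chain_map 0 g z' P + b' P" using fun_cong[OF fg, of P] by simp
  ultimately have h: "1 + b P = b' P" using g0 f1 by simp
  have e: "b' P + (-1) * b P = 1" unfolding h[symmetric] by simp
  have "b' P + (-1) * b P \<in> I" by (rule Iadd[OF Ib[OF b'] Imul[OF Ib[OF b]]])
  then have "1 \<in> I" unfolding e .
  then show False using nI unfolding I_def by auto
qed

lemma bez_gcd:
  fixes mz :: "nat \<Rightarrow> int"
  shows "\<exists>r. (\<Sum>k\<in>{0..L}. r k * mz k) = Gcd (mz ` {0..L})"
proof (induction L)
  case 0
  show ?case by (rule exI[of _ "\<lambda>k. sgn (mz 0)"]) (simp add: abs_sgn)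
next
  case (Suc L)
  then obtain r where r: "(\<Sum>k\<in>{0..L}. r k * mz k) = Gcd (mz ` {0..L})" by blast
  obtain u v where uv: "u * mz (Suc L) + v * Gcd (mz ` {0..L}) = gcd (mz (Suc L)) (Gcd (mz ` {0..L}))"
    using bezout_int by blast
  have G: "Gcd (mz ` {0..Suc L}) = gcd (mz (Suc L)) (Gcd (mz ` {0..L}))"
    by (simp add: atLeast0_atMost_Suc Gcd_insert)
  have "(\<Sum>k\<in>{0..Suc L}. (if k = Suc L then u else v * r k) * mz k)
      = (\<Sum>k\<in>{0..L}. v * (r k * mz k)) + u * mz (Suc L)"
    by (simp add: atLeast0_atMost_Suc mult.assoc)
  also have "\<dots> = u * mz (Suc L) + v * Gcd (mz ` {0..L})"
    by (simp add: sum_distrib_left[symmetric] r)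
  finally show ?case using uv G by metis
qed

theorem mainTheorem4:
  fixes L :: nat and m :: "nat \<Rightarrow> 'r::comm_ring_1" and mz :: "nat \<Rightarrow> int"
  shows "((\<exists>r. (\<Sum>k\<in>{0..L}. r k * m k) = 1) \<longrightarrow> homotopy_axiom TYPE('a) TYPE('b) L m)
       \<and> (homotopy_axiom TYPE(real) TYPE(real) L m \<longrightarrow> (\<exists>r. (\<Sum>k\<in>{0..L}. r k * m k) = 1))
       \<and> (Gcd (mz ` {0..L}) = 1 \<longrightarrow> homotopy_axiom TYPE('c) TYPE('d) L mz)
       \<and> (homotopy_axiom TYPE(real) TYPE(real) L mz \<longrightarrow> Gcd (mz ` {0..L}) = 1)"
proof (intro conjI impI)
  show "homotopy_axiom TYPE('a) TYPE('b) L m" if "\<exists>r. (\<Sum>k\<in>{0..L}. r k * m k) = 1"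
    using that by (rule forward)
  show "\<exists>r. (\<Sum>k\<in>{0..L}. r k * m k) = 1" if "homotopy_axiom TYPE(real) TYPE(real) L m"
    using that by (rule backward)
  show "homotopy_axiom TYPE('c) TYPE('d) L mz" if "Gcd (mz ` {0..L}) = 1"
    using that bez_gcd[of mz L] by (intro forward) simp
  show "Gcd (mz ` {0..L}) = 1" if ha: "homotopy_axiom TYPE(real) TYPE(real) L mz"
  proof -
    obtain r where r: "(\<Sum>k\<in>{0..L}. r k * mz k) = 1" using backward[OF ha] by blast
    have "Gcd (mz ` {0..L}) dvd (\<Sum>k\<in>{0..L}. r k * mz k)"
      by (intro dvd_sum dvd_mult Gcd_dvd_int) auto
    then have "Gcd (mz ` {0..L}) dvd 1" using r by simp
    then have "normalize (Gcd (mz ` {0..L})) = 1" by (rule is_unit_normalize)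
    then show ?thesis by simp
  qed
qed

end
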